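(* Let $m\ge1$. For $q\in[0,1/m]$ let $G(m,q)=(1-(m-1)q)\,H\!\left(\frac{q}{1-(m-1)q}\right)$, where $H(x)=-x\log_2x-(1-x)\log_2(1-x)$ is the binary entropy function (with $H(0)=H(1)=0$). For $n\ge1$ and $q$ let $\mathcal T_n^{(q)}=\{\mathbf s\in\mathcal S_n:\ \#\{k:s_k=-\}=nq\}$. Then there is a sequence $\epsilon_m(n)$ with $\epsilon_m(n)\to0$ as $n\to\infty$, not depending on $q$, such that for all $n\ge1$ and all $q\in[0,1/m]$ with $nq\in\mathbb Z$, $$|\mathcal T_n^{(q)}|<2^{\,n\,(G(m,q)+\epsilon_m(n))}.$$
   Context: Fix an integer $m\ge1$. Define integers $N(n)$ by $N(n)=1$ for $1-m\le n\le 0$ and $N(n)=N(n-1)+N(n-m)$ for $n\ge1$; write $\mathbb N_n=\{1,\dots,N(n)\}$ (so $\mathbb N_n=\{1\}$ for $n\le 0$, and $\mathbb N_{n-m}\subseteq\mathbb N_{n-1}$). Define vectors $\mathbf s_n^{(i)}\in\{+,-,\bigstar\}^n$ for $n\ge0$, $i\in\mathbb N_n$, recursively: $\mathbf s_0^{(1)}$ is the empty vector, and for $n\ge1$: $\mathbf s_n^{(j)}=(\mathbf s_{n-1}^{(j)},+)$ and $\mathbf s_n^{(j+N(n-1))}=(\mathbf s_{n-1}^{(j)},-)$ for $j\in\mathbb N_{n-m}$, while $\mathbf s_n^{(j)}=(\mathbf s_{n-1}^{(j)},\bigstar)$ for $j\in\mathbb N_{n-1}\setminus\mathbb N_{n-m}$.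 Let $\mathcal S_n=\{\mathbf s_n^{(i)}:i\in\mathbb N_n\}$ for $n\ge1$. *)

theory Defs
  imports Complex_Main
begin

text \<open>N(k) for integer k: N(k) = 1 for k \<le> 0, N(k) = N(k-1) + N(k-m) for k \<ge> 1
  (m \<ge> 1 is assumed; for m = 0 we return 1 to ensure totality).\<close>
function NN :: "nat \<Rightarrow> int \<Rightarrow> nat" where
  "NN m k = (if k \<le> 0 \<or> m = 0 then 1 else NN m (k - 1) + NN m (k - int m))"
  by auto
termination by (relation "measure (\<lambda>(m, k). nat k)") auto

declare NN.simps [simp del]

datatype sgn = Plus | Minus | Star

fun svec :: "nat \<Rightarrow> nat \<Rightarrow> nat \<Rightarrow> sgn list" where
  "svec m 0 i = []"
| "svec m (Suc n) i =
     (if i \<le> NN m (int (Suc n) - int m) then svec m n i @ [Plus]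
      else if i \<le> NN m (int n) then svec m n i @ [Star]
      else svec m n (i - NN m (int n)) @ [Minus])"

definition Sset :: "nat \<Rightarrow> nat \<Rightarrow> sgn list set" where
  "Sset m n = {svec m n i | i. i \<in> {1..NN m (int n)}}"

definition Tset :: "nat \<Rightarrow> nat \<Rightarrow> real \<Rightarrow> sgn list set" where
  "Tset m n q = {s \<in> Sset m n. real (card {k. k < n \<and> s ! k = Minus}) = real n * q}"

definition Hent :: "real \<Rightarrow> real" where
  "Hent x = (if x = 0 \<or> x = 1 then 0 else - x * log 2 x - (1 - x) * log 2 (1 - x))"

definition Gfun :: "nat \<Rightarrow> real \<Rightarrow> real" where
  "Gfun m q = (1 - (real m - 1) * q) * Hent (q / (1 - (real m - 1) * q))"

end

theory Submission imports Defs "HOL-Real_Asymp.Real_Asymp" begin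

lemma NN_pos: "NN m k \<ge> 1"
  by (induction m k rule: NN.induct) (subst NN.simps, auto)

lemma NN_step: "m \<ge> 1 \<Longrightarrow> NN m (int (Suc n)) = NN m (int n) + NN m (int (Suc n) - int m)"
  by (subst NN.simps) auto

lemma NN_zero: "k \<le> 0 \<Longrightarrow> NN m k = 1"
  by (subst NN.simps) auto

lemma NN_mono1: "NN m k \<le> NN m (k+1)"
proof (cases "k + 1 \<le> 0 \<or> m = 0")
  case True
  then show ?thesis by (auto simp: NN.simps[of m k] NN.simps[of m "k+1"])
next
  case False
  then show ?thesis by (subst (2) NN.simps) auto
qed

lemma NN_mono: "k \<le> l \<Longrightarrow> NN m k \<le> NN m l"
proof (induction l rule: int_ge_induct)
  case base then show ?case by simp
next
  case (step i) then show ?case using NN_mono1[of m i] by linarith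
qed

lemma svec_len: "length (svec m n i) = n"
  by (induction n arbitrary: i) auto

definition wt :: "real \<Rightarrow> real \<Rightarrow> sgn list \<Rightarrow> real" where
  "wt a b s = a ^ count_list s Minus * b ^ count_list s Plus"

lemma wt_nil[simp]: "wt a b [] = 1" by (simp add: wt_def)
lemma wt_snoc[simp]:
  "wt a b (s @ [Plus]) = wt a b s * b"
  "wt a b (s @ [Minus]) = wt a b s * a"
  "wt a b (s @ [Star]) = wt a b s"
  by (simp_all add: wt_def)

lemma W:
  assumes "m \<ge> 1" "a + b = 1"
  shows "(\<Sum>i=1..NN m (int n). wt a b (svec m n i)) = 1"
proof (induction n)
  case 0
  then show ?case by (simp add: NN_zero)
next
  case (Suc n)
  define A where "A = NN m (int (Suc n) - int m)"
  define B where "B = NN m (int n)"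
  define g where "g = (\<lambda>i. wt a b (svec m n i))"
  have AB: "A \<le> B" unfolding A_def B_def using assms(1) by (intro NN_mono) auto
  have N: "NN m (int (Suc n)) = B + A" unfolding A_def B_def using NN_step[OF assms(1)] by simp
  have sv: "svec m (Suc n) i = (if i \<le> A then svec m n i @ [Plus] else if i \<le> B then svec m n i @ [Star] else svec m n (i - B) @ [Minus])" for i
    unfolding A_def B_def by (simp only: svec.simps)
  have split: "(\<Sum>i=1..B+A. wt a b (svec m (Suc n) i)) =
     (\<Sum>i=1..B. wt a b (svec m (Suc n) i)) + (\<Sum>i=B+1..B+A. wt a b (svec m (Suc n) i))"
    by (rule sum.ub_add_nat) simp
  have p2: "(\<Sum>i=B+1..B+A. wt a b (svec m (Suc n) i)) = (\<Sum>j=1..A. g j * a)"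
  proof -
    have "(\<Sum>i=B+1..B+A. wt a b (svec m (Suc n) i)) = (\<Sum>i=1+B..A+B. wt a b (svec m (Suc n) i))"
      by (simp add: add.commute)
    also have "\<dots> = (\<Sum>j=1..A. wt a b (svec m (Suc n) (j + B)))"
      by (rule sum.shift_bounds_cl_nat_ivl)
    also have "\<dots> = (\<Sum>j=1..A. g j * a)"
    proof (rule sum.cong)
      fix j assume j: "j \<in> {1..A}"
      then have "\<not> j + B \<le> A" "\<not> j + B \<le> B" using AB by auto
      then show "wt a b (svec m (Suc n) (j + B)) = g j * a"
        by (simp add: g_def sv del: svec.simps)
    qed simp
    finally show ?thesis .
  qed
  have p1: "(\<Sum>i=1..B. wt a b (svec m (Suc n) i)) = (\<Sum>i=1..B. g i) - (1 - b) * (\<Sum>i=1..A. g i)"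
  proof -
    have "(\<Sum>i=1..B. wt a b (svec m (Suc n) i)) = (\<Sum>i=1..B. g i - (if i \<le> A then (1-b) * g i else 0))"
    proof (rule sum.cong)
      fix i assume "i \<in> {1..B}"
      then show "wt a b (svec m (Suc n) i) = g i - (if i \<le> A then (1-b) * g i else 0)"
        using AB by (auto simp: g_def sv algebra_simps simp del: svec.simps)
    qed simp
    also have "\<dots> = (\<Sum>i=1..B. g i) - (\<Sum>i=1..B. (if i \<le> A then (1-b) * g i else 0))"
      by (simp add: sum_subtractf)
    also have "(\<Sum>i=1..B. (if i \<le> A then (1-b) * g i else 0)) = (\<Sum>i\<in>{i\<in>{1..B}. i \<le> A}. (1-b) * g i)"
      by (rule sum.inter_filter[symmetric]) simp
    also have "{i\<in>{1..B}. i \<le> A} = {1..A}" using AB by auto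
    finally show ?thesis by (simp add: sum_distrib_left)
  qed
  have IH: "(\<Sum>i=1..B. g i) = 1" using Suc by (simp add: g_def B_def)
  have p3: "(\<Sum>j=1..A. g j * a) = a * (\<Sum>j=1..A. g j)" by (simp add: sum_distrib_left mult.commute)
  have e: "a * (\<Sum>j=1..A. g j) + b * (\<Sum>j=1..A. g j) = (\<Sum>j=1..A. g j)"
    by (metis assms(2) distrib_right mult_1)
  show ?case unfolding N split p1 p2 IH p3 using e by (simp add: algebra_simps)
qed

definition dd :: "nat \<Rightarrow> sgn list \<Rightarrow> int" where
  "dd m s = int (m-1) * int (count_list s Minus) - int (count_list s Star)"

lemma dd_snoc[simp]:
  "dd m (s @ [Plus]) = dd m s"
  "dd m (s @ [Minus]) = dd m s + int (m - 1)"
  "dd m (s @ [Star]) = dd m s - 1"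
  by (simp_all add: dd_def algebra_simps)

lemma inv:
  assumes "m \<ge> 1"
  shows "i \<le> NN m (int n) \<Longrightarrow> i \<le> NN m (int n + 1 - int m + int t) \<Longrightarrow> dd m (svec m n i) \<le> int t"
proof (induction n arbitrary: i t)
  case 0
  then show ?case by (simp add: dd_def)
next
  case (Suc n)
  define A where "A = NN m (int (Suc n) - int m)"
  define B where "B = NN m (int n)"
  have AB: "A \<le> B" unfolding A_def B_def using assms(1) by (intro NN_mono) auto
  have N: "NN m (int (Suc n)) = B + A" unfolding A_def B_def using NN_step[OF assms(1)] by simp
  have sv: "svec m (Suc n) i = (if i \<le> A then svec m n i @ [Plus] else if i \<le> B then svec m n i @ [Star] else svec m n (i - B) @ [Minus])" for i
    unfolding A_def B_def by (simp only: svec.simps)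
  show ?case
  proof (cases "i \<le> A")
    case True
    have "A \<le> NN m (int n + 1 - int m + int t)" unfolding A_def by (intro NN_mono) auto
    then have "dd m (svec m n i) \<le> int t" using True AB by (intro Suc.IH) (auto simp: B_def)
    then show ?thesis using True by (simp add: sv del: svec.simps)
  next
    case F1: False
    show ?thesis
    proof (cases "i \<le> B")
      case True
      have "i \<le> NN m (int n + 1 - int m + int (Suc t))" using Suc.prems(2) by (simp add: algebra_simps)
      then have "dd m (svec m n i) \<le> int (Suc t)" using True by (intro Suc.IH) (auto simp: B_def)
      then show ?thesis using True F1 by (simp add: sv del: svec.simps)
    next
      case False
      have j: "i - B \<le> A" using Suc.prems(1) N by simp
      have eq: "int (Suc n) - int m = int n + 1 - int m + int 0" by simp
      have "i - B \<le> NN m (int n + 1 - int m + int 0)" using j by (simp only: A_def eq)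
      then have d0: "dd m (svec m n (i - B)) \<le> 0" using j AB by (intro Suc.IH[of "i-B" 0, simplified]) (auto simp: B_def)
      have "\<not> (int (Suc n) + 1 - int m + int t \<le> int n)"
      proof
        assume "int (Suc n) + 1 - int m + int t \<le> int n"
        then have "NN m (int (Suc n) + 1 - int m + int t) \<le> B" unfolding B_def by (rule NN_mono)
        then show False using Suc.prems(2) False by simp
      qed
      then have "int (m - 1) \<le> int t" using assms by auto
      then show ?thesis using False F1 d0 by (simp add: sv del: svec.simps)
    qed
  qed
qed

lemma counts: "count_list s Plus + count_list s Minus + count_list s Star = length s"
proof (induction s)
  case (Cons a s) then show ?case by (cases a) auto
qed simp

lemma card_minus: "card {k. k < length s \<and> s ! k = x} = count_list s x"
  by (simp add: count_list_eq_length_filter length_filter_conv_card eq_commute)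

lemma Sset_eq: "Sset m n = svec m n ` {1..NN m (int n)}"
  unfolding Sset_def by auto

lemma key:
  assumes m: "m \<ge> 1" and a: "0 \<le> a" and b: "0 \<le> b" "b \<le> 1" and ab: "a + b = 1"
    and mk: "m * k \<le> n" and q: "real n * q = real k"
  shows "real (card (Tset m n q)) * (a ^ k * b ^ (n + m - 1 - m * k)) \<le> 1"
proof -
  define c where "c = a ^ k * b ^ (n + m - 1 - m * k)"
  have fin: "finite (Sset m n)" unfolding Sset_eq by simp
  have sub: "Tset m n q \<subseteq> Sset m n" unfolding Tset_def by auto
  have finT: "finite (Tset m n q)" using fin sub by (rule finite_subset[rotated])
  have ge: "c \<le> wt a b s" if s: "s \<in> Tset m n q" for s
  proof -
    from s obtain i where i: "i \<in> {1..NN m (int n)}" and si: "s = svec m n i"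
      unfolding Tset_def Sset_eq by auto
    have len: "length s = n" using si svec_len by simp
    have "real (card {k. k < n \<and> s ! k = Minus}) = real k" using s q unfolding Tset_def by simp
    then have cm: "count_list s Minus = k" using card_minus[of s Minus] len by simp
    have "i \<le> NN m (int n + 1 - int m + int (m - 1))" using i m by (simp add: of_nat_diff)
    then have "dd m s \<le> int (m - 1)" using inv[OF m, of i n "m - 1"] i si by simp
    then have h2: "(int m - 1) * int k - int (count_list s Star) \<le> int m - 1"
      using m unfolding dd_def cm by (simp add: of_nat_diff)
    have h1: "int (count_list s Plus) + int k + int (count_list s Star) = int n"
      using counts[of s] len cm by linarith
    have h3: "int (count_list s Plus) \<le> int n + int m - 1 - int m * int k"
      using h1 h2 by (simp add: algebra_simps)
    have h4: "int (n + m - 1 - m * k) = int n + int m - 1 - int m * int k"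
      using m mk by (simp add: of_nat_diff)
    have "int (count_list s Plus) \<le> int (n + m - 1 - m * k)" unfolding h4 by (rule h3)
    then have "count_list s Plus \<le> n + m - 1 - m * k" by simp
    then have "b ^ (n + m - 1 - m * k) \<le> b ^ count_list s Plus"
      using b by (intro power_decreasing) auto
    then show ?thesis unfolding c_def wt_def cm using a by (intro mult_left_mono) auto
  qed
  have "real (card (Tset m n q)) * c = (\<Sum>s\<in>Tset m n q. c)" by simp
  also have "\<dots> \<le> (\<Sum>s\<in>Tset m n q. wt a b s)" using ge by (intro sum_mono) auto
  also have "\<dots> \<le> (\<Sum>s\<in>Sset m n. wt a b s)"
    using fin sub a b by (intro sum_mono2) (auto simp: wt_def)
  also have "\<dots> \<le> (\<Sum>i=1..NN m (int n). wt a b (svec m n i))"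
    unfolding Sset_eq using a b by (intro sum_image_le[unfolded o_def]) (auto simp: wt_def)
  also have "\<dots> = 1" using W[OF m ab] .
  finally show ?thesis unfolding c_def .
qed

lemma exp_bound:
  assumes n: "n \<ge> 1" and k: "k \<le> n"
  shows "((real n + 1) / real n) ^ k \<le> exp 1"
proof -
  have b1: "1 \<le> (real n + 1) / real n" using n by (simp add: field_simps)
  have "((real n + 1) / real n) ^ k \<le> ((real n + 1) / real n) ^ n"
    using b1 k by (rule power_increasing[rotated])
  also have rn: "(real n + 1) / real n = 1 + 1 / real n" using n by (simp add: field_simps)
  also have "(1 + 1 / real n) ^ n \<le> exp (1 / real n) ^ n"
    by (intro power_mono exp_ge_add_one_self) (use n in auto)
  also have "\<dots> = exp (real n * (1 / real n))" by (rule exp_of_nat_mult[symmetric])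
  also have "\<dots> = exp 1" using n by simp
  finally have "(1 + 1 / real n) ^ k \<le> exp 1" .
  then show ?thesis using rn by simp
qed

lemma bound:
  assumes m: "m \<ge> 1" and n: "n \<ge> 1" and q: "q \<in> {0..1 / real m}" and qi: "real n * q \<in> \<int>"
  shows "real (card (Tset m n q)) \<le> exp 1 * (real n + 1) ^ m * 2 powr (real n * Gfun m q)"
proof -
  from qi obtain z where z: "real n * q = of_int z" by (auto elim: Ints_cases)
  have "0 \<le> real n * q" using q by auto
  then have z0: "z \<ge> 0" using z by simp
  define k where "k = nat z"
  have kq: "real n * q = real k" using z z0 unfolding k_def by simp
  have "real m * q \<le> 1" using q m by (auto simp: field_simps)
  then have "real n * (real m * q) \<le> real n" using n by (simp add: mult_left_le)
  moreover have "real (m * k) = real n * (real m * q)" by (simp add: kq[symmetric] algebra_simps)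
  ultimately have "real (m * k) \<le> real n" by linarith
  then have mk: "m * k \<le> n" by linarith
  have "1 * k \<le> m * k" using m by (rule mult_le_mono1)
  then have kn: "k \<le> n" using mk by (metis le_trans mult_1)
  define L where "L = real n - (real m - 1) * real k"
  have Lk: "L - real k = real (n - m * k)" using mk unfolding L_def by (simp add: of_nat_diff algebra_simps)
  have Lkk: "L \<ge> real k" using Lk by simp
  have Ln: "L \<le> real n" unfolding L_def using m by simp
  have Lpos: "L > 0"
  proof (cases "k = 0")
    case True then show ?thesis using n unfolding L_def by simp
  next
    case False then show ?thesis using Lkk by simp
  qed
  have qk: "q = real k / real n" using kq n by (simp add: field_simps)
  have G: "real n * Gfun m q = L * Hent (real k / L)"
  proof -
    have e1: "1 - (real m - 1) * q = L / real n" using n unfolding qk L_def by (simp add: field_simps)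
    have e2: "q / (L / real n) = real k / L" using n Lpos unfolding qk by (simp add: field_simps)
    show ?thesis unfolding Gfun_def e1 e2 using n by simp
  qed
  define B where "B = exp 1 * (real n + 1) ^ m"
  have pm: "(real n + 1) ^ (m - 1) \<le> (real n + 1) ^ m" by (intro power_increasing) auto
  have B1: "(real n + 1) ^ m \<le> B" unfolding B_def by simp
  have Bge1: "1 \<le> B" using B1 by (smt (verit) one_le_power of_nat_0_le_iff)
  have "real (card (Tset m n q)) \<le> B * 2 powr (L * Hent (real k / L))"
  proof (cases "k = 0")
    case True
    have "real (card (Tset m n q)) * (0 ^ k * 1 ^ (n + m - 1 - m * k)) \<le> 1"
      by (rule key[OF m _ _ _ _ mk kq]) auto
    then show ?thesis using True Bge1 by (simp add: Hent_def)
  next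
    case k0: False
    show ?thesis
    proof (cases "m * k = n")
      case True
      have Lk1: "real k / L = 1" using Lk True k0 by simp
      define a where "a = real n / (real n + 1)"
      define b where "b = 1 / (real n + 1)"
      have "real (card (Tset m n q)) * (a ^ k * b ^ (n + m - 1 - m * k)) \<le> 1"
        by (rule key[OF m _ _ _ _ mk kq]) (auto simp: a_def b_def field_simps)
      moreover have "n + m - 1 - m * k = m - 1" using True m by simp
      ultimately have c1: "real (card (Tset m n q)) * (a ^ k * b ^ (m - 1)) \<le> 1" by simp
      have P: "a ^ k * b ^ (m - 1) > 0" using n by (simp add: a_def b_def)
      have "real (card (Tset m n q)) \<le> 1 / (a ^ k * b ^ (m - 1))"
        using c1 P by (simp add: field_simps)
      also have "1 / (a ^ k * b ^ (m - 1)) = ((real n + 1) / real n) ^ k * (real n + 1) ^ (m - 1)"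
        using n by (simp add: a_def b_def power_divide field_simps)
      also have "\<dots> \<le> exp 1 * (real n + 1) ^ m"
        using exp_bound[OF n kn] pm
        by (intro mult_mono) auto
      finally show ?thesis using Lk1 by (simp add: Hent_def B_def)
    next
      case False
      then have nmk: "n - m * k \<ge> 1" using mk by simp
      define x where "x = real k / L"
      have x0: "0 < x" using k0 Lpos unfolding x_def by simp
      have r1: "real (n - m * k) \<ge> 1" using nmk by (metis of_nat_1 of_nat_le_iff)
      have Lk1: "L - real k \<ge> 1" using Lk r1 by linarith
      have x1: "x < 1" using Lk1 Lpos unfolding x_def by (simp add: pos_divide_less_eq)
      have "real (card (Tset m n q)) * (x ^ k * (1 - x) ^ (n + m - 1 - m * k)) \<le> 1"
        by (rule key[OF m _ _ _ _ mk kq]) (use x0 x1 in auto)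
      moreover have "n + m - 1 - m * k = (n - m * k) + (m - 1)" using mk m by simp
      ultimately have c1: "real (card (Tset m n q)) * ((x ^ k * (1 - x) ^ (n - m * k)) * (1 - x) ^ (m - 1)) \<le> 1"
        by (simp add: power_add mult_ac)
      define Y where "Y = x ^ k * (1 - x) ^ (n - m * k)"
      have Y0: "Y > 0" using x0 x1 unfolding Y_def by simp
      have P: "Y * (1 - x) ^ (m - 1) > 0" using Y0 x1 by simp
      have "real (card (Tset m n q)) \<le> 1 / (Y * (1 - x) ^ (m - 1))"
        using c1 P unfolding Y_def[symmetric] by (simp add: field_simps)
      also have "\<dots> = (1 / Y) * (1 / (1 - x)) ^ (m - 1)" by (simp add: power_divide)
      also have "\<dots> \<le> (1 / Y) * B"
      proof (intro mult_left_mono)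
        have "1 / (1 - x) = L / (L - real k)" using Lpos x1 unfolding x_def by (simp add: field_simps)
        also have "\<dots> \<le> L" using Lk1 Lpos by (simp add: divide_le_eq)
        also have "\<dots> \<le> real n + 1" using Ln by simp
        finally have "(1 / (1 - x)) ^ (m - 1) \<le> (real n + 1) ^ (m - 1)"
          by (intro power_mono) (use x1 in auto)
        then show "(1 / (1 - x)) ^ (m - 1) \<le> B" using pm B1 by linarith
      qed (use Y0 in simp)
      also have "1 / Y = 2 powr (L * Hent x)"
      proof -
        have Lx: "L * x = real k" using Lpos unfolding x_def by simp
        have L1x: "L * (1 - x) = real (n - m * k)" using Lx Lk by (simp add: algebra_simps)
        have h: "L * Hent x = - ((L * x) * log 2 x + (L * (1 - x)) * log 2 (1 - x))"
          using x0 x1 unfolding Hent_def by (simp add: algebra_simps)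
        have "L * Hent x = - (real k * log 2 x + real (n - m * k) * log 2 (1 - x))"
          unfolding h Lx L1x ..
        also have "\<dots> = - log 2 Y"
          unfolding Y_def using x0 x1 by (simp add: log_mult log_nat_power)
        finally have "2 powr (L * Hent x) = inverse (2 powr log 2 Y)" by (simp add: powr_minus)
        also have "\<dots> = 1 / Y" using Y0 by (simp add: divide_inverse)
        finally show ?thesis by simp
      qed
      finally show ?thesis unfolding x_def by (simp add: mult.commute)
    qed
  qed
  then show ?thesis unfolding G B_def .
qed

theorem lemma3:
  fixes m :: nat
  assumes "m \<ge> 1"
  shows "\<exists>eps :: nat \<Rightarrow> real. eps \<longlonglongrightarrow> 0 \<and>
    (\<forall>n q. n \<ge> 1 \<longrightarrow> q \<in> {0..1 / real m} \<longrightarrow> real n * q \<in> \<int> \<longrightarrow>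
       real (card (Tset m n q)) < 2 powr (real n * (Gfun m q + eps n)))"
proof (intro exI conjI allI impI)
  define c where "c = log 2 (2 * exp 1)"
  let ?eps = "\<lambda>n::nat. (c + real m * log 2 (real n + 1)) / real n"
  have e: "?eps = (\<lambda>n. c * (1 / real n) + (real m / ln 2) * (ln (real n + 1) / real n))"
    by (rule ext) (simp add: log_def add_divide_distrib)
  have l1: "(\<lambda>n. 1 / real n) \<longlonglongrightarrow> 0" by real_asymp
  have l2: "(\<lambda>n. ln (real n + 1) / real n) \<longlonglongrightarrow> 0" by real_asymp
  have "(\<lambda>n. c * (1 / real n) + (real m / ln 2) * (ln (real n + 1) / real n)) \<longlonglongrightarrow> c * 0 + (real m / ln 2) * 0"
    by (intro tendsto_add tendsto_mult tendsto_const l1 l2)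
  then show "?eps \<longlonglongrightarrow> 0" unfolding e by simp
  fix n q assume n: "n \<ge> 1" and q: "q \<in> {0..1 / real m}" and qi: "real n * q \<in> \<int>"
  have bd: "real (card (Tset m n q)) \<le> exp 1 * (real n + 1) ^ m * 2 powr (real n * Gfun m q)"
    by (rule bound[OF assms n q qi])
  define Y where "Y = 2 * exp 1 * (real n + 1) ^ m"
  have Y0: "Y > 0" unfolding Y_def by simp
  have nY: "real n * ?eps n = log 2 Y"
    using n unfolding Y_def c_def by (simp add: log_mult log_nat_power)
  have "2 powr (real n * (Gfun m q + ?eps n)) = 2 powr (real n * Gfun m q) * Y"
    unfolding distrib_left powr_add nY using Y0 by simp
  also have "\<dots> = 2 * (exp 1 * (real n + 1) ^ m * 2 powr (real n * Gfun m q))"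
    unfolding Y_def by (simp add: mult_ac)
  also have "\<dots> > exp 1 * (real n + 1) ^ m * 2 powr (real n * Gfun m q)" by simp
  finally show "real (card (Tset m n q)) < 2 powr (real n * (Gfun m q + ?eps n))" using bd by linarith
qed

end
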